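(* Let the six equivalence operations $\equiv_0,\dots,\equiv_5$ on an ortholattice be as defined in the context. Then: (i) In every orthomodular lattice, $a' = a\equiv_i 0$ for all elements $a$ and each $i=0,1,\dots,5$. (ii) Let $t(a,b)$ be any term built from the variables $a,b$ and the constants $0,1$ using only the operations $\equiv_0,\dots,\equiv_5$ and orthocomplementation $'$. Then $t(a,b)$ is not equal in the free orthomodular lattice on the two generators $a,b$ (equivalently, is not identically equal in all orthomodular lattices) to any classical or quantum join or meet (in particular, to none of the implications $a\to_i b$, $i=0,\dots,5$, nor to their complements).
   Context: An orthomodular lattice (OML) is an ortholattice $(L,\cap,\cup,{}',0,1)$ satisfying $a\le b \Rightarrow b = a\cup(a'\cap b)$. The equivalence operations are $a\equiv_0 b=(a'\cup b)\cap(a\cup b')$, $a\equiv_1 b=(a\cup b')\cap(a'\cup(a\cap b))$, $a\equiv_2 b=(a\cup b')\cap(b\cup(a'\cap b'))$, $a\equiv_3 b=(a'\cup b)\cap(a\cup(a'\cap b'))$, $a\equiv_4 b=(a'\cup b)\cap(b'\cup(a\cap b))$, $a\equiv_5 b=(a\cap b)\cup(a'\cap b')$. The implications are $a\to_0 b=a'\cup b$, $a\to_1 b=a'\cup(a\cap b)$, $a\to_2 b=b\cup(a'\cap b')$, $a\to_3 b=(a'\cap b)\cup(a'\cap b')\cup(a\cap(a'\cup b))$, $a\to_4 b=(a\cap b)\cup(a'\cap b)\cup((a'\cup b)\cap b')$, $a\to_5 b=(a\cap b)\cup(a'\cap b)\cup(a'\cap b')$. A (classical or quantum) join, resp. meet,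 in two variables is a two-variable orthomodular-lattice term which, when evaluated in Boolean algebras, reduces to one of the classical joins $a\cup b$, $a\cup b'$, $a'\cup b$, $a'\cup b'$, resp. one of the classical meets $a\cap b$, $a\cap b'$, $a'\cap b$, $a'\cap b'$. *)

theory Defs
  imports Main
begin

record 'a ortho =
  ol_carrier :: "'a set"
  ol_meet :: "'a \<Rightarrow> 'a \<Rightarrow> 'a"
  ol_join :: "'a \<Rightarrow> 'a \<Rightarrow> 'a"
  ol_compl :: "'a \<Rightarrow> 'a"
  ol_zero :: 'a
  ol_one :: 'a

definition ol_le :: "'a ortho \<Rightarrow> 'a \<Rightarrow> 'a \<Rightarrow> bool" where
  "ol_le L x y \<longleftrightarrow> ol_meet L x y = x"

definition ortholattice :: "'a ortho \<Rightarrow> bool" where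
  "ortholattice L \<longleftrightarrow>
     (let C = ol_carrier L; m = ol_meet L; j = ol_join L; c = ol_compl L in
      ol_zero L \<in> C \<and> ol_one L \<in> C \<and>
      (\<forall>x\<in>C. \<forall>y\<in>C. m x y \<in> C \<and> j x y \<in> C) \<and>
      (\<forall>x\<in>C. c x \<in> C) \<and>
      (\<forall>x\<in>C. \<forall>y\<in>C. m x y = m y x \<and> j x y = j y x) \<and>
      (\<forall>x\<in>C. \<forall>y\<in>C. \<forall>z\<in>C. m (m x y) z = m x (m y z) \<and> j (j x y) z = j x (j y z)) \<and>
      (\<forall>x\<in>C. \<forall>y\<in>C. m x (j x y) = x \<and> j x (m x y) = x) \<and>
      (\<forall>x\<in>C. ol_le L (ol_zero L) x \<and> ol_le L x (ol_one L)) \<and>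
      (\<forall>x\<in>C. c (c x) = x) \<and>
      (\<forall>x\<in>C. \<forall>y\<in>C. ol_le L x y \<longrightarrow> ol_le L (c y) (c x)) \<and>
      (\<forall>x\<in>C. m x (c x) = ol_zero L \<and> j x (c x) = ol_one L))"

definition orthomodular :: "'a ortho \<Rightarrow> bool" where
  "orthomodular L \<longleftrightarrow> ortholattice L \<and>
     (\<forall>x\<in>ol_carrier L. \<forall>y\<in>ol_carrier L. ol_le L x y \<longrightarrow>
        y = ol_join L x (ol_meet L (ol_compl L x) y))"

datatype eqv_idx = E0 | E1 | E2 | E3 | E4 | E5

fun ol_equiv :: "'a ortho \<Rightarrow> eqv_idx \<Rightarrow> 'a \<Rightarrow> 'a \<Rightarrow> 'a" where
  "ol_equiv L E0 a b = ol_meet L (ol_join L (ol_compl L a) b) (ol_join L a (ol_compl L b))"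
| "ol_equiv L E1 a b = ol_meet L (ol_join L a (ol_compl L b)) (ol_join L (ol_compl L a) (ol_meet L a b))"
| "ol_equiv L E2 a b = ol_meet L (ol_join L a (ol_compl L b)) (ol_join L b (ol_meet L (ol_compl L a) (ol_compl L b)))"
| "ol_equiv L E3 a b = ol_meet L (ol_join L (ol_compl L a) b) (ol_join L a (ol_meet L (ol_compl L a) (ol_compl L b)))"
| "ol_equiv L E4 a b = ol_meet L (ol_join L (ol_compl L a) b) (ol_join L (ol_compl L b) (ol_meet L a b))"
| "ol_equiv L E5 a b = ol_join L (ol_meet L a b) (ol_meet L (ol_compl L a) (ol_compl L b))"

datatype olterm = TA | TB | TZero | TOne | TCompl olterm | TMeet olterm olterm | TJoin olterm olterm

fun ol_eval :: "'a ortho \<Rightarrow> olterm \<Rightarrow> 'a \<Rightarrow> 'a \<Rightarrow> 'a" where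
  "ol_eval L TA a b = a"
| "ol_eval L TB a b = b"
| "ol_eval L TZero a b = ol_zero L"
| "ol_eval L TOne a b = ol_one L"
| "ol_eval L (TCompl t) a b = ol_compl L (ol_eval L t a b)"
| "ol_eval L (TMeet t s) a b = ol_meet L (ol_eval L t a b) (ol_eval L s a b)"
| "ol_eval L (TJoin t s) a b = ol_join L (ol_eval L t a b) (ol_eval L s a b)"

datatype eqterm = QA | QB | QZero | QOne | QCompl eqterm | QEqv eqv_idx eqterm eqterm

fun eq_eval :: "'a ortho \<Rightarrow> eqterm \<Rightarrow> 'a \<Rightarrow> 'a \<Rightarrow> 'a" where
  "eq_eval L QA a b = a"
| "eq_eval L QB a b = b"
| "eq_eval L QZero a b = ol_zero L"
| "eq_eval L QOne a b = ol_one L"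
| "eq_eval L (QCompl t) a b = ol_compl L (eq_eval L t a b)"
| "eq_eval L (QEqv i t s) a b = ol_equiv L i (eq_eval L t a b) (eq_eval L s a b)"

text \<open>Evaluation in the two-element Boolean algebra (which generates the variety
  of Boolean algebras, so identities there are exactly the Boolean identities).\<close>
fun bool_eval :: "olterm \<Rightarrow> bool \<Rightarrow> bool \<Rightarrow> bool" where
  "bool_eval TA a b = a"
| "bool_eval TB a b = b"
| "bool_eval TZero a b = False"
| "bool_eval TOne a b = True"
| "bool_eval (TCompl t) a b = (\<not> bool_eval t a b)"
| "bool_eval (TMeet t s) a b = (bool_eval t a b \<and> bool_eval s a b)"
| "bool_eval (TJoin t s) a b = (bool_eval t a b \<or> bool_eval s a b)"

definition classical_or_quantum_join :: "olterm \<Rightarrow> bool" where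
  "classical_or_quantum_join s \<longleftrightarrow> bool_eval s \<in>
     {\<lambda>a b. a \<or> b, \<lambda>a b. a \<or> \<not> b, \<lambda>a b. \<not> a \<or> b, \<lambda>a b. \<not> a \<or> \<not> b}"

definition classical_or_quantum_meet :: "olterm \<Rightarrow> bool" where
  "classical_or_quantum_meet s \<longleftrightarrow> bool_eval s \<in>
     {\<lambda>a b. a \<and> b, \<lambda>a b. a \<and> \<not> b, \<lambda>a b. \<not> a \<and> b, \<lambda>a b. \<not> a \<and> \<not> b}"

text \<open>OMLs are taken with carrier in nat (the free OML on two generators is finite, so this loses nothing).\<close>
definition oml_identity :: "eqterm \<Rightarrow> olterm \<Rightarrow> bool" where
  "oml_identity t s \<longleftrightarrow>
     (\<forall>L :: nat ortho. orthomodular L \<longrightarrow>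
        (\<forall>a\<in>ol_carrier L. \<forall>b\<in>ol_carrier L. eq_eval L t a b = ol_eval L s a b))"

end

theory Submission
  imports Defs
begin

lemma part1:
  assumes "orthomodular L" "a \<in> ol_carrier L"
  shows "ol_compl L a = ol_equiv L i a (ol_zero L)"
proof -
  have OL: "ortholattice L" using assms(1) unfolding orthomodular_def by simp
  let ?C = "ol_carrier L" and ?m = "ol_meet L" and ?j = "ol_join L" and ?c = "ol_compl L"
    and ?z = "ol_zero L" and ?o = "ol_one L"
  have z: "?z \<in> ?C" and o: "?o \<in> ?C" using OL unfolding ortholattice_def Let_def by auto
  have cl: "\<And>x. x \<in> ?C \<Longrightarrow> ?c x \<in> ?C" using OL unfolding ortholattice_def Let_def by auto
  have mc: "\<And>x y. x \<in> ?C \<Longrightarrow> y \<in> ?C \<Longrightarrow> ?m x y = ?m y x"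
   and jc: "\<And>x y. x \<in> ?C \<Longrightarrow> y \<in> ?C \<Longrightarrow> ?j x y = ?j y x"
   and ab1: "\<And>x y. x \<in> ?C \<Longrightarrow> y \<in> ?C \<Longrightarrow> ?m x (?j x y) = x"
   and ab2: "\<And>x y. x \<in> ?C \<Longrightarrow> y \<in> ?C \<Longrightarrow> ?j x (?m x y) = x"
   and le0: "\<And>x. x \<in> ?C \<Longrightarrow> ?m ?z x = ?z"
   and le1: "\<And>x. x \<in> ?C \<Longrightarrow> ?m x ?o = x"
   and cm: "\<And>x. x \<in> ?C \<Longrightarrow> ?m x (?c x) = ?z \<and> ?j x (?c x) = ?o"
    using OL unfolding ortholattice_def Let_def ol_le_def by auto
  have m0: "\<And>x. x \<in> ?C \<Longrightarrow> ?m x ?z = ?z" using le0 mc z by metis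
  have j0: "\<And>x. x \<in> ?C \<Longrightarrow> ?j x ?z = x" using ab2 m0 z by metis
  have j0': "\<And>x. x \<in> ?C \<Longrightarrow> ?j ?z x = x" using j0 jc z by metis
  have m1': "\<And>x. x \<in> ?C \<Longrightarrow> ?m ?o x = x" using le1 mc o by metis
  have j1': "\<And>x. x \<in> ?C \<Longrightarrow> ?j ?o x = ?o" using ab2 m1' o by metis
  have j1: "\<And>x. x \<in> ?C \<Longrightarrow> ?j x ?o = ?o" using j1' jc o by metis
  have cz: "?c ?z = ?o" using cm[OF z] j0' cl[OF z] by metis
  have ca: "?c a \<in> ?C" using cl assms(2) by blast
  show ?thesis
    by (cases i) (simp_all add: cz j0 j1 m0 le1 m1' j0' ca assms(2) z o cm)
qed

definition L2 :: "nat ortho" where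
  "L2 = \<lparr>ol_carrier = {0,1}, ol_meet = min, ol_join = max, ol_compl = (\<lambda>x. 1 - x),
         ol_zero = 0, ol_one = 1\<rparr>"

lemma L2_oml: "orthomodular L2"
  unfolding orthomodular_def ortholattice_def L2_def ol_le_def Let_def by (simp add: Ball_def)

fun geval :: "eqterm \<Rightarrow> bool \<Rightarrow> bool \<Rightarrow> bool" where
  "geval QA a b = a"
| "geval QB a b = b"
| "geval QZero a b = False"
| "geval QOne a b = True"
| "geval (QCompl t) a b = (\<not> geval t a b)"
| "geval (QEqv i t s) a b = (geval t a b = geval s a b)"

definition b2n :: "bool \<Rightarrow> nat" where "b2n P = (if P then 1 else 0)"

lemma b2n_ops: "min (b2n P) (b2n Q) = b2n (P \<and> Q)" "max (b2n P) (b2n Q) = b2n (P \<or> Q)"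
  "1 - b2n P = b2n (\<not> P)" "Suc 0 - b2n P = b2n (\<not> P)"
  by (auto simp: b2n_def)

lemma b2n_inj: "(b2n P = b2n Q) = (P = Q)" by (auto simp: b2n_def)

lemma L2_ops: "ol_meet L2 = min" "ol_join L2 = max" "ol_compl L2 = (\<lambda>x. 1 - x)"
  "ol_zero L2 = b2n False" "ol_one L2 = b2n True"
  by (simp_all add: L2_def b2n_def)

lemma L2_equiv: "ol_equiv L2 i (b2n p) (b2n q) = b2n (p = q)"
  by (cases i; cases p; cases q) (simp_all add: L2_ops b2n_ops)

lemma L2_eq': "eq_eval L2 t (b2n a) (b2n b) = b2n (geval t a b)"
  by (induction t) (simp_all add: L2_ops b2n_ops L2_equiv)

lemma L2_ol': "ol_eval L2 s (b2n a) (b2n b) = b2n (bool_eval s a b)"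
  by (induction s) (simp_all add: L2_ops b2n_ops)

lemma xor1: "((c \<noteq> ((x \<and> a) \<noteq> (y \<and> b))) = (c2 \<noteq> ((x2 \<and> a) \<noteq> (y2 \<and> b)))) = ((c = c2) \<noteq> ((((x \<noteq> x2) \<and> a) \<noteq> ((y \<noteq> y2) \<and> b))))"
  by (cases a; cases b; cases c; cases c2; cases x; cases x2; cases y; cases y2; simp)
lemma xor2: "(\<not>(c \<noteq> ((x \<and> a) \<noteq> (y \<and> b)))) = ((\<not>c) \<noteq> ((x \<and> a) \<noteq> (y \<and> b)))"
  by (cases a; cases b; cases c; cases x; cases y; simp)

lemma affine: "\<exists>c x y. \<forall>a b. geval t a b = (c \<noteq> ((x \<and> a) \<noteq> (y \<and> b)))"
proof (induction t)
  case QA then show ?case by (rule exI[of _ False], rule exI[of _ True], rule exI[of _ False]) simp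
next
  case QB then show ?case by (rule exI[of _ False], rule exI[of _ False], rule exI[of _ True]) simp
next
  case QZero then show ?case by (rule exI[of _ False], rule exI[of _ False], rule exI[of _ False]) simp
next
  case QOne then show ?case by (rule exI[of _ True], rule exI[of _ False], rule exI[of _ False]) simp
next
  case (QCompl t)
  then obtain c x y where h: "\<forall>a b. geval t a b = (c \<noteq> ((x \<and> a) \<noteq> (y \<and> b)))" by (elim exE)
  show ?case
  proof (intro exI allI)
    fix a b
    show "geval (QCompl t) a b = ((\<not>c) \<noteq> ((x \<and> a) \<noteq> (y \<and> b)))"
      unfolding geval.simps h[rule_format] by (rule xor2)
  qed
next
  case (QEqv i t s)
  from QEqv.IH(1) obtain c x y where h: "\<forall>a b. geval t a b = (c \<noteq> ((x \<and> a) \<noteq> (y \<and> b)))"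
    by (elim exE)
  from QEqv.IH(2) obtain c2 x2 y2 where h2: "\<forall>a b. geval s a b = (c2 \<noteq> ((x2 \<and> a) \<noteq> (y2 \<and> b)))"
    by (elim exE)
  show ?case
  proof (intro exI allI)
    fix a b
    show "geval (QEqv i t s) a b = ((c = c2) \<noteq> ((((x \<noteq> x2) \<and> a) \<noteq> ((y \<noteq> y2) \<and> b))))"
      unfolding geval.simps h[rule_format] h2[rule_format] by (rule xor1)
  qed
qed

lemma part2:
  assumes "classical_or_quantum_join s \<or> classical_or_quantum_meet s"
  shows "\<not> oml_identity t s"
proof
  assume "oml_identity t s"
  then have e: "\<forall>a\<in>{0,1}. \<forall>b\<in>{0,1}. eq_eval L2 t a b = ol_eval L2 s a b"
    unfolding oml_identity_def using L2_oml by (simp add: L2_def)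
  have "geval t = bool_eval s"
  proof (intro ext)
    fix a b :: bool
    have "b2n a \<in> {0,1}" "b2n b \<in> {0,1}" by (simp_all add: b2n_def)
    then have "b2n (geval t a b) = b2n (bool_eval s a b)"
      unfolding L2_eq' [symmetric] L2_ol' [symmetric] using e by blast
    then show "geval t a b = bool_eval s a b" by (simp only: b2n_inj)
  qed
  moreover obtain c x y where h: "\<forall>a b. geval t a b = (c \<noteq> ((x \<and> a) \<noteq> (y \<and> b)))"
    using affine[of t] by (elim exE)
  ultimately have hs: "\<forall>a b. bool_eval s a b = (c \<noteq> ((x \<and> a) \<noteq> (y \<and> b)))" by simp
  have par: "((bool_eval s True True \<noteq> bool_eval s True False) \<noteq>
              (bool_eval s False True \<noteq> bool_eval s False False)) = False"
    unfolding hs[rule_format] by (cases c; cases x; cases y) simp_all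
  have "((f True True \<noteq> f True False) \<noteq> (f False True \<noteq> f False False)) = True"
    if "f \<in> {\<lambda>a b. a \<or> b, \<lambda>a b. a \<or> \<not> b, \<lambda>a b. \<not> a \<or> b, \<lambda>a b. \<not> a \<or> \<not> b,
       \<lambda>a b. a \<and> b, \<lambda>a b. a \<and> \<not> b, \<lambda>a b. \<not> a \<and> b, \<lambda>a b. \<not> a \<and> \<not> b}" for f :: "bool \<Rightarrow> bool \<Rightarrow> bool"
    using that by (elim insertE emptyE) simp_all
  moreover have "bool_eval s \<in> {\<lambda>a b. a \<or> b, \<lambda>a b. a \<or> \<not> b, \<lambda>a b. \<not> a \<or> b, \<lambda>a b. \<not> a \<or> \<not> b,
       \<lambda>a b. a \<and> b, \<lambda>a b. a \<and> \<not> b, \<lambda>a b. \<not> a \<and> b, \<lambda>a b. \<not> a \<and> \<not> b}"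
    using assms unfolding classical_or_quantum_join_def classical_or_quantum_meet_def by blast
  ultimately show False using par by simp
qed

theorem theorem3:
  shows "(\<forall>(L :: 'a ortho). orthomodular L \<longrightarrow>
            (\<forall>a\<in>ol_carrier L. \<forall>i. ol_compl L a = ol_equiv L i a (ol_zero L)))
       \<and> (\<forall>(t :: eqterm) (s :: olterm).
            (classical_or_quantum_join s \<or> classical_or_quantum_meet s) \<longrightarrow>
            \<not> oml_identity t s)"
proof (intro conjI allI impI ballI)
  fix L :: "'a ortho" and a i
  assume "orthomodular L" "a \<in> ol_carrier L"
  then show "ol_compl L a = ol_equiv L i a (ol_zero L)" by (rule part1)
next
  fix t s
  assume "classical_or_quantum_join s \<or> classical_or_quantum_meet s"
  then show "\<not> oml_identity t s" by (rule part2)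
qed

end
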